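(* In the setting of the context, for every $i\in\{1,\dots,N\}$, $$C_i:=\sum_{j=1}^M\sum_{l\ne i}|U_{j,s_i}|\,|U_{j,s_l}|\le 2\sqrt{\eta\,kN^{\gamma+1}},$$ where $\eta=\max_\alpha\eta_\alpha$.
   Context: $M=kN^\gamma$ modes ($k>0$, $\gamma>1$, $M\ge N$) partitioned into $N$ disjoint sublattices $\mathcal L_1,\dots,\mathcal L_N$ of $M/N$ modes each, sublattice $\mathcal L_\alpha$ containing exactly one source mode $s_\alpha$. $U$ is an $M\times M$ unitary (of a linear-optical circuit, $\hat a_j\mapsto\sum_kU_{jk}\hat a_k$). The leakage rate of source $\alpha$ is $\eta_\alpha=\sum_{j\notin\mathcal L_\alpha}|U_{j,s_\alpha}|^2$. *)

theory Defs
  imports "HOL-Analysis.Analysis"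
begin

definition unitary_matrix :: "nat \<Rightarrow> (nat \<Rightarrow> nat \<Rightarrow> complex) \<Rightarrow> bool" where
  "unitary_matrix M U \<longleftrightarrow>
     (\<forall>a<M. \<forall>b<M. (\<Sum>j<M. cnj (U j a) * U j b) = (if a = b then 1 else 0)) \<and>
     (\<forall>a<M. \<forall>b<M. (\<Sum>j<M. U a j * cnj (U b j)) = (if a = b then 1 else 0))"

definition leakage :: "nat \<Rightarrow> (nat \<Rightarrow> nat \<Rightarrow> complex) \<Rightarrow> (nat \<Rightarrow> nat set) \<Rightarrow> (nat \<Rightarrow> nat) \<Rightarrow> nat \<Rightarrow> real" where
  "leakage M U L s \<alpha> = (\<Sum>j\<in>{..<M} - L \<alpha>. (cmod (U j (s \<alpha>)))\<^sup>2)"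

end

theory Submission
  imports Defs
begin

lemma cs_sum:
  fixes f g :: "nat \<Rightarrow> real"
  assumes "\<And>j. f j \<ge> 0" "\<And>j. g j \<ge> 0"
  shows "(\<Sum>j\<in>A. f j * g j) \<le> sqrt (\<Sum>j\<in>A. (f j)\<^sup>2) * sqrt (\<Sum>j\<in>A. (g j)\<^sup>2)"
  using L2_set_mult_ineq[of f g A] assms unfolding L2_set_def by simp

lemma col_norm:
  assumes "unitary_matrix M U" "a < M"
  shows "(\<Sum>j<M. (cmod (U j a))\<^sup>2) = 1"
proof -
  have "(\<Sum>j<M. cnj (U j a) * U j a) = 1" using assms unfolding unitary_matrix_def by auto
  moreover have "cnj (U j a) * U j a = of_real ((cmod (U j a))\<^sup>2)" for j
    using complex_norm_square[of "U j a"] by (simp add: mult.commute)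
  ultimately have "of_real (\<Sum>j<M. (cmod (U j a))\<^sup>2) = (1::complex)" by simp
  thus ?thesis using of_real_eq_1_iff by blast
qed

theorem lemma4:
  fixes M N :: nat and k \<gamma> :: real
    and U :: "nat \<Rightarrow> nat \<Rightarrow> complex"
    and L :: "nat \<Rightarrow> nat set" and s :: "nat \<Rightarrow> nat"
  assumes k_pos: "k > 0" and gamma: "\<gamma> > 1"
    and M_def: "real M = k * real N powr \<gamma>"
    and MN: "M \<ge> N"
    and L_sub: "\<forall>\<alpha><N. L \<alpha> \<subseteq> {..<M}"
    and L_cover: "(\<Union>\<alpha><N. L \<alpha>) = {..<M}"
    and L_disj: "\<forall>\<alpha><N. \<forall>\<beta><N. \<alpha> \<noteq> \<beta> \<longrightarrow> L \<alpha> \<inter> L \<beta> = {}"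
    and L_card: "\<forall>\<alpha><N. real (card (L \<alpha>)) = real M / real N"
    and src: "\<forall>\<alpha><N. s \<alpha> \<in> L \<alpha>"
    and U_unitary: "unitary_matrix M U"
    and i: "i < N"
  shows "(\<Sum>j<M. \<Sum>l\<in>{..<N} - {i}. cmod (U j (s i)) * cmod (U j (s l)))
           \<le> 2 * sqrt (Max ((\<lambda>\<alpha>. leakage M U L s \<alpha>) ` {..<N}) * k * real N powr (\<gamma> + 1))"
proof -
  define \<eta> where "\<eta> = Max ((\<lambda>\<alpha>. leakage M U L s \<alpha>) ` {..<N})"
  have leq: "leakage M U L s \<alpha> \<le> \<eta>" if "\<alpha> < N" for \<alpha>
    unfolding \<eta>_def using that by (intro Max_ge) auto
  have lnn: "leakage M U L s \<alpha> \<ge> 0" for \<alpha>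
    unfolding leakage_def by (intro sum_nonneg) auto
  have eta_nn: "\<eta> \<ge> 0" using leq[OF i] lnn[of i] by linarith
  have sM: "s \<alpha> < M" if "\<alpha> < N" for \<alpha> using src L_sub that by blast
  have one: "(\<Sum>j\<in>A. (cmod (U j (s \<alpha>)))\<^sup>2) \<le> 1" if "\<alpha> < N" "A \<subseteq> {..<M}" for \<alpha> A
  proof -
    have "(\<Sum>j\<in>A. (cmod (U j (s \<alpha>)))\<^sup>2) \<le> (\<Sum>j<M. (cmod (U j (s \<alpha>)))\<^sup>2)"
      using that by (intro sum_mono2) auto
    thus ?thesis using col_norm[OF U_unitary sM[OF that(1)]] by simp
  qed
  have lk: "(\<Sum>j\<in>A. (cmod (U j (s \<alpha>)))\<^sup>2) \<le> \<eta>" if "\<alpha> < N" "A \<subseteq> {..<M} - L \<alpha>" for \<alpha> A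
  proof -
    have "(\<Sum>j\<in>A. (cmod (U j (s \<alpha>)))\<^sup>2) \<le> leakage M U L s \<alpha>"
      unfolding leakage_def using that by (intro sum_mono2) auto
    thus ?thesis using leq[OF that(1)] by simp
  qed
  have per: "(\<Sum>j<M. cmod (U j (s i)) * cmod (U j (s l))) \<le> 2 * sqrt \<eta>"
    if l: "l < N" "l \<noteq> i" for l
  proof -
    let ?a = "\<lambda>j. cmod (U j (s i))" and ?b = "\<lambda>j. cmod (U j (s l))"
    have fin: "finite (L i)" using L_sub i finite_subset by blast
    have spl: "{..<M} = L i \<union> ({..<M} - L i)" using L_sub i by blast
    have "(\<Sum>j<M. ?a j * ?b j) = (\<Sum>j\<in>L i. ?a j * ?b j) + (\<Sum>j\<in>{..<M} - L i. ?a j * ?b j)"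
      by (subst spl, rule sum.union_disjoint) (use fin in auto)
    also have "(\<Sum>j\<in>L i. ?a j * ?b j) \<le> sqrt (\<Sum>j\<in>L i. (?a j)\<^sup>2) * sqrt (\<Sum>j\<in>L i. (?b j)\<^sup>2)"
      by (rule cs_sum) auto
    also have "\<dots> \<le> 1 * sqrt \<eta>"
    proof (rule mult_mono)
      show "sqrt (\<Sum>j\<in>L i. (?a j)\<^sup>2) \<le> 1" using one[OF i, of "L i"] L_sub i by simp
      have "L i \<subseteq> {..<M} - L l" using L_sub L_disj i l by blast
      then show "sqrt (\<Sum>j\<in>L i. (?b j)\<^sup>2) \<le> sqrt \<eta>" using lk[OF l(1)] by simp
    qed (auto intro: sum_nonneg)
    also have "(\<Sum>j\<in>{..<M} - L i. ?a j * ?b j)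
        \<le> sqrt (\<Sum>j\<in>{..<M} - L i. (?a j)\<^sup>2) * sqrt (\<Sum>j\<in>{..<M} - L i. (?b j)\<^sup>2)"
      by (rule cs_sum) auto
    also have "\<dots> \<le> sqrt \<eta> * 1"
    proof (rule mult_mono)
      show "sqrt (\<Sum>j\<in>{..<M} - L i. (?a j)\<^sup>2) \<le> sqrt \<eta>" using lk[OF i] by simp
      show "sqrt (\<Sum>j\<in>{..<M} - L i. (?b j)\<^sup>2) \<le> 1" using one[OF l(1), of "{..<M} - L i"] by simp
    qed (auto intro: sum_nonneg simp: eta_nn)
    finally show ?thesis by simp
  qed
  have "(\<Sum>j<M. \<Sum>l\<in>{..<N} - {i}. cmod (U j (s i)) * cmod (U j (s l)))
      = (\<Sum>l\<in>{..<N} - {i}. \<Sum>j<M. cmod (U j (s i)) * cmod (U j (s l)))"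
    by (rule sum.swap)
  also have "\<dots> \<le> (\<Sum>l\<in>{..<N} - {i}. 2 * sqrt \<eta>)"
    by (rule sum_mono) (use per in auto)
  also have "\<dots> = real (N - 1) * (2 * sqrt \<eta>)" using i by simp
  also have "\<dots> \<le> real N * (2 * sqrt \<eta>)" using eta_nn by (intro mult_right_mono) auto
  also have "\<dots> = 2 * sqrt (\<eta> * (real N * real N))"
    by (simp add: real_sqrt_mult)
  also have "\<dots> \<le> 2 * sqrt (\<eta> * k * real N powr (\<gamma> + 1))"
  proof -
    have Np: "real N > 0" using i by simp
    have "real N powr (\<gamma> + 1) = real N powr \<gamma> * real N" using Np by (simp add: powr_add)
    hence "k * real N powr (\<gamma> + 1) = real M * real N" using M_def by simp
    moreover have "real N * real N \<le> real M * real N" using MN by (intro mult_right_mono) auto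
    ultimately have "\<eta> * (real N * real N) \<le> \<eta> * k * real N powr (\<gamma> + 1)"
      using eta_nn by (simp add: mult.assoc mult_left_mono)
    thus ?thesis by simp
  qed
  finally show ?thesis unfolding \<eta>_def .
qed

end
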